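(* Let $G$ be a finite group. The graph $\mathcal{P}^*(G)/\mathtt{O}$ is a tame quotient of $\mathcal{P}^*(G)$ if and only if, for all $x,y\in G\setminus\{1\}$, $x\mathtt{O}y$ implies $x=y$.
   Context: The power graph $\mathcal{P}(G)$ has vertex set $G$, distinct $x,y$ adjacent iff one is a positive integer power of the other; $\mathcal{P}^*(G)$ is its subgraph induced on $G\setminus\{1\}$. $x\mathtt{O}y$ ($x,y$ open twins) iff $x$ and $y$ have the same open neighbourhood (set of neighbours excluding the vertex itself). For a graph $\Gamma$ and equivalence $\sim$ on its vertices, $\Gamma/\sim$ has vertex set the classes, classes joined iff some representatives are joined; the quotient is tame if $[x]=[y]$ implies $x$ and $y$ are joined by a path in $\Gamma$. *)

theory Defs
  imports "HOL-Algebra.Group"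
begin

definition power_adj :: "('a, 'b) monoid_scheme \<Rightarrow> 'a \<Rightarrow> 'a \<Rightarrow> bool" where
  "power_adj G x y \<longleftrightarrow> x \<in> carrier G \<and> y \<in> carrier G \<and> x \<noteq> y \<and>
     ((\<exists>n::nat. n > 0 \<and> y = x [^]\<^bsub>G\<^esub> n) \<or> (\<exists>n::nat. n > 0 \<and> x = y [^]\<^bsub>G\<^esub> n))"

definition pstar_vertices :: "('a, 'b) monoid_scheme \<Rightarrow> 'a set" where
  "pstar_vertices G = carrier G - {\<one>\<^bsub>G\<^esub>}"

definition induced_adj :: "'a set \<Rightarrow> ('a \<Rightarrow> 'a \<Rightarrow> bool) \<Rightarrow> 'a \<Rightarrow> 'a \<Rightarrow> bool" where
  "induced_adj V E x y \<longleftrightarrow> x \<in> V \<and> y \<in> V \<and> E x y"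

definition open_nbhd :: "'a set \<Rightarrow> ('a \<Rightarrow> 'a \<Rightarrow> bool) \<Rightarrow> 'a \<Rightarrow> 'a set" where
  "open_nbhd V E x = {y \<in> V. E x y}"

definition open_twins :: "'a set \<Rightarrow> ('a \<Rightarrow> 'a \<Rightarrow> bool) \<Rightarrow> 'a \<Rightarrow> 'a \<Rightarrow> bool" where
  "open_twins V E x y \<longleftrightarrow> x \<in> V \<and> y \<in> V \<and> open_nbhd V E x = open_nbhd V E y"

definition tame_quotient :: "'a set \<Rightarrow> ('a \<Rightarrow> 'a \<Rightarrow> bool) \<Rightarrow> ('a \<Rightarrow> 'a \<Rightarrow> bool) \<Rightarrow> bool" where
  "tame_quotient V E R \<longleftrightarrow>
     (\<forall>x\<in>V. \<forall>y\<in>V. R x y \<longrightarrow> (\<lambda>a b. a \<in> V \<and> b \<in> V \<and> E a b)\<^sup>*\<^sup>* x y)"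

end

theory Submission
  imports Defs "HOL-Algebra.Multiplicative_Group"
begin

lemma (in group) inv_pos_pow:
  assumes "finite (carrier G)" "w \<in> carrier G"
  shows "\<exists>N::nat. N > 0 \<and> inv w = w [^] N"
proof -
  have o: "order G > 0" using assms(1) order_gt_0_iff_finite by blast
  have "w [^] (2 * order G - 1) \<otimes> w = w [^] (2 * order G)"
    using o assms(2) by (metis Suc_diff_1 mult_pos_pos nat_pow_Suc zero_less_numeral)
  also have "\<dots> = \<one>" using assms(2) pow_order_eq_1
    by (metis mult.commute nat_pow_one nat_pow_pow)
  finally have "inv w = w [^] (2 * order G - 1)"
    using assms(2) by (intro inv_equality) auto
  moreover have "2 * order G - 1 > 0" using o by simp
  ultimately show ?thesis by blast
qed

lemma (in group) invol_pow:
  assumes "x \<in> carrier G" "x \<otimes> x = \<one>"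
  shows "x [^] (n::nat) = (if even n then \<one> else x)"
proof (induction n)
  case 0 then show ?case by simp
next
  case (Suc n) then show ?case using assms by auto
qed

lemma (in group) invol_parity:
  assumes "x \<otimes> x = \<one>" "y \<otimes> y = \<one>" "x \<noteq> \<one>" "y \<noteq> \<one>"
  shows "z \<in> carrier G \<Longrightarrow> z [^] (a::nat) = x \<Longrightarrow> z [^] (b::nat) = y \<Longrightarrow> x = y"
proof (induction a arbitrary: b z rule: less_induct)
  case (less a)
  have xc: "x \<in> carrier G" "y \<in> carrier G" using less.prems by auto
  have a0: "a > 0" using less.prems assms by (cases a) auto
  have eq: "x [^] b = y [^] a"
    using less.prems by (metis mult.commute nat_pow_pow)
  show ?case
  proof (cases "even a \<and> even b")
    case True
    then obtain a' b' where ab: "a = 2 * a'" "b = 2 * b'" by blast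
    have "(z [^] (2::nat)) [^] a' = x" "(z [^] (2::nat)) [^] b' = y"
      using less.prems ab by (auto simp: nat_pow_pow)
    moreover have "a' < a" using a0 ab by simp
    ultimately show ?thesis using less.IH less.prems(1) by blast
  next
    case False
    then show ?thesis using eq invol_pow[OF xc(1) assms(1)] invol_pow[OF xc(2) assms(2)] assms
      by (auto split: if_splits)
  qed
qed

lemma invol_of_twin:
  fixes G (structure)
  assumes grp: "group G" and fin: "finite (carrier G)"
    and xV: "x \<in> pstar_vertices G" and yV: "y \<in> pstar_vertices G" and xy: "x \<noteq> y"
    and nadj: "\<not> power_adj G x y"
    and nb: "\<forall>w \<in> pstar_vertices G. power_adj G x w \<longrightarrow> power_adj G y w"
  shows "x \<otimes>\<^bsub>G\<^esub> x = \<one>\<^bsub>G\<^esub>"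
proof (rule ccontr)
  interpret group G by fact
  assume nx: "x \<otimes> x \<noteq> \<one>"
  have xc: "x \<in> carrier G" "x \<noteq> \<one>" using xV by (auto simp: pstar_vertices_def)
  have yc: "y \<in> carrier G" "y \<noteq> \<one>" using yV by (auto simp: pstar_vertices_def)
  have ixx: "inv x \<noteq> x" using nx xc by (metis r_inv)
  have ic: "inv x \<in> carrier G" "inv x \<noteq> \<one>" using xc by auto
  obtain N :: nat where N: "N > 0" "inv x = x [^] N" using inv_pos_pow[OF fin xc(1)] by blast
  have "power_adj G x (inv x)" using N xc ic ixx unfolding power_adj_def by metis
  then have "power_adj G y (inv x)" using nb ic by (auto simp: pstar_vertices_def)
  then consider (a) k where "k > 0" "inv x = y [^] (k::nat)" | (b) k where "k > 0" "y = inv x [^] (k::nat)"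
    unfolding power_adj_def by blast
  then show False
  proof cases
    case a
    obtain M :: nat where M: "M > 0" "inv (y [^] k) = (y [^] k) [^] M"
      using inv_pos_pow[OF fin, of "y [^] k"] yc by auto
    have "x = inv (y [^] k)" using a xc by (metis inv_inv)
    also have "\<dots> = y [^] (k * M)" using M yc by (simp add: nat_pow_pow)
    finally have "power_adj G x y"
      using a M xc yc xy unfolding power_adj_def by (metis mult_pos_pos)
    then show False using nadj by simp
  next
    case b
    have "y = x [^] (N * k)" using b N xc by (simp add: nat_pow_pow)
    then have "power_adj G x y"
      using b N xc yc xy unfolding power_adj_def by (metis mult_pos_pos)
    then show False using nadj by simp
  qed
qed

lemma twin_isolated:
  fixes G (structure)
  assumes grp: "group G" and fin: "finite (carrier G)"
    and tw: "open_twins (pstar_vertices G) (induced_adj (pstar_vertices G) (power_adj G)) x y"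
    and xy: "x \<noteq> y"
  shows "\<not> induced_adj (pstar_vertices G) (power_adj G) x w"
proof
  interpret group G by fact
  assume Exw: "induced_adj (pstar_vertices G) (power_adj G) x w"
  have xV: "x \<in> pstar_vertices G" and yV: "y \<in> pstar_vertices G"
    and nbe: "open_nbhd (pstar_vertices G) (induced_adj (pstar_vertices G) (power_adj G)) x
            = open_nbhd (pstar_vertices G) (induced_adj (pstar_vertices G) (power_adj G)) y"
    using tw unfolding open_twins_def by auto
  have nb: "\<And>w. w \<in> pstar_vertices G \<Longrightarrow> power_adj G x w \<longleftrightarrow> power_adj G y w"
  proof -
    fix w assume "w \<in> pstar_vertices G"
    then show "power_adj G x w \<longleftrightarrow> power_adj G y w"
      using nbe xV yV unfolding open_nbhd_def induced_adj_def by blast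
  qed
  have sym: "\<And>a b. power_adj G a b \<longleftrightarrow> power_adj G b a" unfolding power_adj_def by blast
  have nadj: "\<not> power_adj G x y"
  proof
    assume "power_adj G x y"
    then have "power_adj G y y" using nb yV by blast
    then show False unfolding power_adj_def by blast
  qed
  have xx: "x \<otimes> x = \<one>"
    using invol_of_twin[OF grp fin xV yV xy nadj] nb by blast
  have yx: "y \<otimes> y = \<one>"
    using invol_of_twin[OF grp fin yV xV _ _] nb nadj sym xy by metis
  have xc: "x \<in> carrier G" "x \<noteq> \<one>" using xV by (auto simp: pstar_vertices_def)
  have yc: "y \<in> carrier G" "y \<noteq> \<one>" using yV by (auto simp: pstar_vertices_def)
  have wV: "w \<in> pstar_vertices G" and pxw: "power_adj G x w" using Exw unfolding induced_adj_def by auto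
  have wc: "w \<in> carrier G" "w \<noteq> \<one>" using wV by (auto simp: pstar_vertices_def)
  have pyw: "power_adj G y w" using nb wV pxw by blast
  have "\<exists>a::nat. w [^] a = x"
  proof -
    have "\<not> (\<exists>n::nat. n > 0 \<and> w = x [^] n)"
      using invol_pow[OF xc(1) xx] wc pxw unfolding power_adj_def by auto
    then show ?thesis using pxw unfolding power_adj_def by metis
  qed
  then obtain a :: nat where a: "w [^] a = x" by blast
  have "\<exists>b::nat. w [^] b = y"
  proof -
    have "\<not> (\<exists>n::nat. n > 0 \<and> w = y [^] n)"
      using invol_pow[OF yc(1) yx] wc pyw unfolding power_adj_def by auto
    then show ?thesis using pyw unfolding power_adj_def by metis
  qed
  then obtain b :: nat where b: "w [^] b = y" by blast
  have "x = y" using invol_parity[OF xx yx xc(2) yc(2) wc(1) a b] .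
  then show False using xy by simp
qed

theorem mainTheorem19:
  fixes G (structure)
  assumes "group G" and "finite (carrier G)"
  shows "tame_quotient (pstar_vertices G) (induced_adj (pstar_vertices G) (power_adj G))
           (open_twins (pstar_vertices G) (induced_adj (pstar_vertices G) (power_adj G)))
     \<longleftrightarrow> (\<forall>x \<in> pstar_vertices G. \<forall>y \<in> pstar_vertices G.
           open_twins (pstar_vertices G) (induced_adj (pstar_vertices G) (power_adj G)) x y \<longrightarrow> x = y)"
proof
  assume T: "tame_quotient (pstar_vertices G) (induced_adj (pstar_vertices G) (power_adj G))
           (open_twins (pstar_vertices G) (induced_adj (pstar_vertices G) (power_adj G)))"
  show "\<forall>x \<in> pstar_vertices G. \<forall>y \<in> pstar_vertices G.
           open_twins (pstar_vertices G) (induced_adj (pstar_vertices G) (power_adj G)) x y \<longrightarrow> x = y"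
  proof (intro ballI impI)
    fix x y assume xV: "x \<in> pstar_vertices G" and yV: "y \<in> pstar_vertices G"
      and tw: "open_twins (pstar_vertices G) (induced_adj (pstar_vertices G) (power_adj G)) x y"
    show "x = y"
    proof (rule ccontr)
      assume xy: "x \<noteq> y"
      have iso: "\<And>w. \<not> induced_adj (pstar_vertices G) (power_adj G) x w"
        using twin_isolated[OF assms tw xy] by blast
      have "(\<lambda>a b. a \<in> pstar_vertices G \<and> b \<in> pstar_vertices G \<and>
               induced_adj (pstar_vertices G) (power_adj G) a b)\<^sup>*\<^sup>* x y"
        using T xV yV tw unfolding tame_quotient_def by blast
      then show False
        by (rule converse_rtranclpE) (use xy iso in auto)
    qed
  qed
next
  assume "\<forall>x \<in> pstar_vertices G. \<forall>y \<in> pstar_vertices G.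
           open_twins (pstar_vertices G) (induced_adj (pstar_vertices G) (power_adj G)) x y \<longrightarrow> x = y"
  then show "tame_quotient (pstar_vertices G) (induced_adj (pstar_vertices G) (power_adj G))
           (open_twins (pstar_vertices G) (induced_adj (pstar_vertices G) (power_adj G)))"
    unfolding tame_quotient_def by auto
qed

end
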